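(* Let $\mathcal{H}_1,\mathcal{H}_2$ be finite-dimensional Hilbert spaces of dimensions $d_1,d_2$, and let $f:\mathcal{L}(\mathcal{H}_1)\to\mathcal{L}(\mathcal{H}_2)$ be a linear, unitarity-preserving map with $f(\mathbb{1}_1)=\mathbb{1}_2$. Then $d_2/d_1$ is an integer, and whenever $|\psi\rangle\langle\psi|,|\phi\rangle\langle\phi|\in\mathcal{L}(\mathcal{H}_1)$ are two orthogonal projectors onto pure states, $f(|\psi\rangle\langle\psi|)$ and $f(|\phi\rangle\langle\phi|)$ are two orthogonal projectors of rank $d_2/d_1$.
   Context: A map $f:\mathcal{L}(\mathcal{H}_1)\to\mathcal{L}(\mathcal{H}_2)$ is unitarity preserving if $f(U)$ is unitary for every unitary $U\in\mathcal{L}(\mathcal{H}_1)$. $\mathbb{1}_k$ is the identity on $\mathcal{H}_k$. *)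

theory Defs
  imports "Jordan_Normal_Form.Schur_Decomposition" "Jordan_Normal_Form.DL_Rank"
begin

text \<open>Operators on a d-dimensional Hilbert space are complex d x d matrices.\<close>

definition unitary_mat :: "nat \<Rightarrow> complex mat \<Rightarrow> bool" where
  "unitary_mat n U \<longleftrightarrow> U \<in> carrier_mat n n \<and> U * mat_adjoint U = 1\<^sub>m n \<and> mat_adjoint U * U = 1\<^sub>m n"

definition linear_map_mat :: "nat \<Rightarrow> nat \<Rightarrow> (complex mat \<Rightarrow> complex mat) \<Rightarrow> bool" where
  "linear_map_mat d1 d2 f \<longleftrightarrow>
     (\<forall>A \<in> carrier_mat d1 d1. f A \<in> carrier_mat d2 d2) \<and>
     (\<forall>A \<in> carrier_mat d1 d1. \<forall>B \<in> carrier_mat d1 d1. f (A + B) = f A + f B) \<and>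
     (\<forall>c. \<forall>A \<in> carrier_mat d1 d1. f (c \<cdot>\<^sub>m A) = c \<cdot>\<^sub>m f A)"

definition unitarity_preserving :: "nat \<Rightarrow> nat \<Rightarrow> (complex mat \<Rightarrow> complex mat) \<Rightarrow> bool" where
  "unitarity_preserving d1 d2 f \<longleftrightarrow> (\<forall>U. unitary_mat d1 U \<longrightarrow> unitary_mat d2 (f U))"

definition ket_bra :: "complex vec \<Rightarrow> complex mat" where
  "ket_bra v = mat (dim_vec v) (dim_vec v) (\<lambda>(i, j). v $ i * cnj (v $ j))"

definition orth_projector :: "nat \<Rightarrow> complex mat \<Rightarrow> bool" where
  "orth_projector n P \<longleftrightarrow> P \<in> carrier_mat n n \<and> mat_adjoint P = P \<and> P * P = P"

end

theory Submission
  imports Defs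
begin


lemma adj_carrier[simp]: "A \<in> carrier_mat nr nc \<Longrightarrow> mat_adjoint A \<in> carrier_mat nc nr"
  unfolding mat_adjoint_def by (auto simp: mat_of_rows_def)

lemma adj_dims[simp]: "dim_row (mat_adjoint A) = dim_col A" "dim_col (mat_adjoint A) = dim_row A"
  unfolding mat_adjoint_def by (auto simp: mat_of_rows_def)

lemma adj_index[simp]: "i < dim_col A \<Longrightarrow> j < dim_row A \<Longrightarrow> mat_adjoint A $$ (i,j) = cnj (A $$ (j,i))"
  unfolding mat_adjoint_def by (auto simp: mat_of_rows_def conjugate_complex_def)

lemma e_ml_add:
  fixes X Y Z :: "complex mat"
  assumes "X \<in> carrier_mat n n" "Y \<in> carrier_mat n n" "Z \<in> carrier_mat n n" "i < n" "j < n"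
  shows "((X + Y) * Z) $$ (i,j) = (X * Z) $$ (i,j) + (Y * Z) $$ (i,j)"
  using assms by (simp add: add_mult_distrib_mat del: index_mult_mat(1))

lemma e_mr_add:
  fixes X Y Z :: "complex mat"
  assumes "X \<in> carrier_mat n n" "Y \<in> carrier_mat n n" "Z \<in> carrier_mat n n" "i < n" "j < n"
  shows "(Z * (X + Y)) $$ (i,j) = (Z * X) $$ (i,j) + (Z * Y) $$ (i,j)"
  using assms by (simp add: mult_add_distrib_mat del: index_mult_mat(1))

lemma e_ml_smult:
  fixes X Y Z :: "complex mat"
  assumes "X \<in> carrier_mat n n" "Z \<in> carrier_mat n n" "i < n" "j < n"
  shows "((c \<cdot>\<^sub>m X) * Z) $$ (i,j) = c * (X * Z) $$ (i,j)"
  using assms by (simp add: mult_smult_assoc_mat[OF assms(1,2)] del: index_mult_mat(1))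

lemma e_mr_smult:
  fixes X Y Z :: "complex mat"
  assumes "X \<in> carrier_mat n n" "Z \<in> carrier_mat n n" "i < n" "j < n"
  shows "(Z * (c \<cdot>\<^sub>m X)) $$ (i,j) = c * (Z * X) $$ (i,j)"
  using assms by (simp add: mult_smult_distrib[OF assms(2,1)] del: index_mult_mat(1))

lemma e_ml_one:
  fixes X Y Z :: "complex mat"
  assumes "Z \<in> carrier_mat n n" "i < n" "j < n"
  shows "(1\<^sub>m n * Z) $$ (i,j) = Z $$ (i,j)"
  using assms by (simp add: left_mult_one_mat[OF assms(1)] del: index_mult_mat(1))

lemma e_mr_one:
  fixes X Y Z :: "complex mat"
  assumes "Z \<in> carrier_mat n n" "i < n" "j < n"
  shows "(Z * 1\<^sub>m n) $$ (i,j) = Z $$ (i,j)"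
  using assms by (simp add: right_mult_one_mat[OF assms(1)] del: index_mult_mat(1))

lemmas e_rules = e_ml_add e_mr_add e_ml_smult e_mr_smult e_ml_one e_mr_one

lemma adj_one_plus:
  assumes "Q \<in> carrier_mat n n"
  shows "mat_adjoint (1\<^sub>m n + c \<cdot>\<^sub>m Q) = 1\<^sub>m n + cnj c \<cdot>\<^sub>m mat_adjoint Q"
  using assms by (intro eq_matI) auto


lemma unitary_cons:
  assumes Q: "Q \<in> carrier_mat n n" and U: "unitary_mat n (1\<^sub>m n + c \<cdot>\<^sub>m Q)" and ij: "i < n" "j < n"
  shows "c * Q $$ (i,j) + cnj c * cnj (Q $$ (j,i)) + c * cnj c * (Q * mat_adjoint Q) $$ (i,j) = 0"
proof -
  have H: "mat_adjoint Q \<in> carrier_mat n n" using Q by simp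
  from U have "(1\<^sub>m n + c \<cdot>\<^sub>m Q) * (1\<^sub>m n + cnj c \<cdot>\<^sub>m mat_adjoint Q) = 1\<^sub>m n"
    unfolding unitary_mat_def adj_one_plus[OF Q] by simp
  hence 1: "((1\<^sub>m n + c \<cdot>\<^sub>m Q) * (1\<^sub>m n + cnj c \<cdot>\<^sub>m mat_adjoint Q)) $$ (i,j) = 1\<^sub>m n $$ (i,j)" by simp
  have 2: "((1\<^sub>m n + c \<cdot>\<^sub>m Q) * (1\<^sub>m n + cnj c \<cdot>\<^sub>m mat_adjoint Q)) $$ (i,j) = 1\<^sub>m n $$ (i,j) +
     (c * Q $$ (i,j) + cnj c * cnj (Q $$ (j,i)) + c * cnj c * (Q * mat_adjoint Q) $$ (i,j))"
    using Q ij by (simp add: e_rules[where n=n] algebra_simps del: index_mult_mat(1))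
  from 1 2 show ?thesis by simp
qed


lemma lin_aux:
  fixes a b m :: complex
  assumes h1: "(-2) * a + (-2) * b + 4 * m = 0" and h2: "(\<i> - 1) * a + (- \<i> - 1) * b + 2 * m = 0"
  shows "b = a" "m = a"
proof -
  from h1 have "2 * (2 * m - a - b) = 0" by (simp add: algebra_simps)
  hence "2 * m - a - b = 0" by (metis mult_eq_0_iff zero_neq_numeral)
  hence m: "2 * m = a + b" by (metis diff_diff_eq eq_iff_diff_eq_0)
  from h2 have "(\<i> - 1) * a + (- \<i> - 1) * b + (a + b) = 0" unfolding m[symmetric] by simp
  hence "\<i> * (a - b) = 0" by (simp add: algebra_simps)
  thus "b = a" by simp
  with m show "m = a" by simp
qed

lemma unitary_of_proj:
  assumes P: "orth_projector n P" and c: "c + cnj c + c * cnj c = 0"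
  shows "unitary_mat n (1\<^sub>m n + c \<cdot>\<^sub>m P)"
proof -
  have Pc: "P \<in> carrier_mat n n" and Pa: "mat_adjoint P = P" and PP: "P * P = P"
    using P unfolding orth_projector_def by auto
  have adj: "mat_adjoint (1\<^sub>m n + c \<cdot>\<^sub>m P) = 1\<^sub>m n + cnj c \<cdot>\<^sub>m P"
    using adj_one_plus[OF Pc] Pa by simp
  have m1: "(1\<^sub>m n + c \<cdot>\<^sub>m P) * (1\<^sub>m n + cnj c \<cdot>\<^sub>m P) = 1\<^sub>m n"
  proof (rule eq_matI)
    fix i j assume "i < dim_row (1\<^sub>m n)" "j < dim_col (1\<^sub>m n)"
    hence ij: "i < n" "j < n" by auto
    have "((1\<^sub>m n + c \<cdot>\<^sub>m P) * (1\<^sub>m n + cnj c \<cdot>\<^sub>m P)) $$ (i,j) = 1\<^sub>m n $$ (i,j) +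
     (c + cnj c) * P $$ (i,j) + c * cnj c * (P * P) $$ (i,j)"
      using Pc ij by (simp add: e_rules[where n=n] algebra_simps del: index_mult_mat(1))
    also have "\<dots> = 1\<^sub>m n $$ (i,j) + (c + cnj c + c * cnj c) * P $$ (i,j)"
      unfolding PP by (simp add: algebra_simps)
    finally show "((1\<^sub>m n + c \<cdot>\<^sub>m P) * (1\<^sub>m n + cnj c \<cdot>\<^sub>m P)) $$ (i,j) = 1\<^sub>m n $$ (i,j)"
      using c by simp
  qed (use Pc in auto)
  have m2: "(1\<^sub>m n + cnj c \<cdot>\<^sub>m P) * (1\<^sub>m n + c \<cdot>\<^sub>m P) = 1\<^sub>m n"
  proof (rule eq_matI)
    fix i j assume "i < dim_row (1\<^sub>m n)" "j < dim_col (1\<^sub>m n)"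
    hence ij: "i < n" "j < n" by auto
    have "((1\<^sub>m n + cnj c \<cdot>\<^sub>m P) * (1\<^sub>m n + c \<cdot>\<^sub>m P)) $$ (i,j) = 1\<^sub>m n $$ (i,j) +
     (c + cnj c) * P $$ (i,j) + c * cnj c * (P * P) $$ (i,j)"
      using Pc ij by (simp add: e_rules[where n=n] algebra_simps del: index_mult_mat(1))
    also have "\<dots> = 1\<^sub>m n $$ (i,j) + (c + cnj c + c * cnj c) * P $$ (i,j)"
      unfolding PP by (simp add: algebra_simps)
    finally show "((1\<^sub>m n + cnj c \<cdot>\<^sub>m P) * (1\<^sub>m n + c \<cdot>\<^sub>m P)) $$ (i,j) = 1\<^sub>m n $$ (i,j)"
      using c by simp
  qed (use Pc in auto)
  show ?thesis unfolding unitary_mat_def adj using m1 m2 Pc by auto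
qed

lemma lin_D:
  assumes "linear_map_mat d1 d2 f"
  shows "A \<in> carrier_mat d1 d1 \<Longrightarrow> f A \<in> carrier_mat d2 d2"
    and "A \<in> carrier_mat d1 d1 \<Longrightarrow> B \<in> carrier_mat d1 d1 \<Longrightarrow> f (A + B) = f A + f B"
    and "A \<in> carrier_mat d1 d1 \<Longrightarrow> f (c \<cdot>\<^sub>m A) = c \<cdot>\<^sub>m f A"
  using assms unfolding linear_map_mat_def by auto

lemma proj_image:
  assumes lin: "linear_map_mat d1 d2 f" and up: "unitarity_preserving d1 d2 f"
    and f1: "f (1\<^sub>m d1) = 1\<^sub>m d2" and P: "orth_projector d1 P"
  shows "orth_projector d2 (f P)"
proof -
  have Pc: "P \<in> carrier_mat d1 d1" using P unfolding orth_projector_def by auto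
  define Q where "Q = f P"
  have Qc: "Q \<in> carrier_mat d2 d2" using lin_D(1)[OF lin Pc] Q_def by simp
  have fU: "unitary_mat d2 (1\<^sub>m d2 + c \<cdot>\<^sub>m Q)" if c: "c + cnj c + c * cnj c = 0" for c
  proof -
    have "unitary_mat d1 (1\<^sub>m d1 + c \<cdot>\<^sub>m P)" by (rule unitary_of_proj[OF P c])
    hence "unitary_mat d2 (f (1\<^sub>m d1 + c \<cdot>\<^sub>m P))" using up unfolding unitarity_preserving_def by auto
    also have "f (1\<^sub>m d1 + c \<cdot>\<^sub>m P) = 1\<^sub>m d2 + c \<cdot>\<^sub>m Q"
      using lin_D(2)[OF lin, of "1\<^sub>m d1" "c \<cdot>\<^sub>m P"] lin_D(3)[OF lin Pc, of c] Pc f1 Q_def by simp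
    finally show ?thesis .
  qed
  have e1: "(-2) * Q $$ (i,j) + (-2) * cnj (Q $$ (j,i)) + 4 * (Q * mat_adjoint Q) $$ (i,j) = 0"
    if ij: "i < d2" "j < d2" for i j
    using unitary_cons[OF Qc fU[of "-2"] ij] by simp
  have e2: "(\<i> - 1) * Q $$ (i,j) + (- \<i> - 1) * cnj (Q $$ (j,i)) + 2 * (Q * mat_adjoint Q) $$ (i,j) = 0"
    if ij: "i < d2" "j < d2" for i j
  proof -
    have b: "cnj (\<i> - 1) = - \<i> - 1" by simp
    have a: "(\<i> - 1) * (- \<i> - 1) = 2" by (simp add: ring_distribs)
    have "(\<i> - 1) + cnj (\<i> - 1) + (\<i> - 1) * cnj (\<i> - 1) = 0" unfolding b a by simp
    from unitary_cons[OF Qc fU[OF this] ij] show ?thesis unfolding b a by simp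
  qed
  have herm: "cnj (Q $$ (j,i)) = Q $$ (i,j)" and sq: "(Q * mat_adjoint Q) $$ (i,j) = Q $$ (i,j)"
    if ij: "i < d2" "j < d2" for i j
  proof -
    note x = lin_aux[OF e1[OF ij] e2[OF ij]]
    show "cnj (Q $$ (j,i)) = Q $$ (i,j)" by (rule x(1))
    show "(Q * mat_adjoint Q) $$ (i,j) = Q $$ (i,j)" by (rule x(2))
  qed
  have QA: "mat_adjoint Q = Q"
    by (rule eq_matI) (use Qc herm in auto)
  have QQ: "Q * Q = Q"
    by (rule eq_matI) (use Qc sq QA in \<open>auto simp del: index_mult_mat(1)\<close>)
  show ?thesis unfolding orth_projector_def Q_def[symmetric] using Qc QA QQ by simp
qed


definition outer :: "complex vec \<Rightarrow> complex vec \<Rightarrow> complex mat" where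
  "outer u v = mat (dim_vec u) (dim_vec u) (\<lambda>(i,j). u $ i * cnj (v $ j))"

lemma outer_dims[simp]: "dim_row (outer u v) = dim_vec u" "dim_col (outer u v) = dim_vec u"
  unfolding outer_def by auto

lemma smult_one_c[simp]: "(1::complex) \<cdot>\<^sub>m A = A" by (rule eq_matI) auto

lemma kb_outer: "ket_bra v = outer v v" unfolding ket_bra_def outer_def by simp

lemma outer_carrier[simp]: "u \<in> carrier_vec n \<Longrightarrow> outer u v \<in> carrier_mat n n"
  unfolding outer_def by auto

lemma outer_index[simp]: "u \<in> carrier_vec n \<Longrightarrow> i < n \<Longrightarrow> j < n \<Longrightarrow> outer u v $$ (i,j) = u $ i * cnj (v $ j)"
  unfolding outer_def by auto

lemma cprod_sum: "w \<in> carrier_vec n \<Longrightarrow> v \<bullet>c w = (\<Sum>k<n. v $ k * cnj (w $ k))"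
  unfolding scalar_prod_def by (auto simp: conjugate_complex_def atLeast0LessThan)

lemma outer_mult:
  assumes "u \<in> carrier_vec n" "v \<in> carrier_vec n" "w \<in> carrier_vec n" "x \<in> carrier_vec n"
  shows "outer u v * outer w x = (w \<bullet>c v) \<cdot>\<^sub>m outer u x"
proof (rule eq_matI)
  fix i j assume "i < dim_row ((w \<bullet>c v) \<cdot>\<^sub>m outer u x)" "j < dim_col ((w \<bullet>c v) \<cdot>\<^sub>m outer u x)"
  hence ij: "i < n" "j < n" using assms by auto
  have "(outer u v * outer w x) $$ (i,j) = (\<Sum>k<n. (u $ i * cnj (v $ k)) * (w $ k * cnj (x $ j)))"
    using assms ij by (simp add: scalar_prod_def atLeast0LessThan)
  also have "\<dots> = (\<Sum>k<n. (w $ k * cnj (v $ k)) * (u $ i * cnj (x $ j)))"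
    by (rule sum.cong) (simp_all add: algebra_simps)
  also have "\<dots> = (\<Sum>k<n. w $ k * cnj (v $ k)) * (u $ i * cnj (x $ j))"
    by (rule sum_distrib_right[symmetric])
  also have "\<dots> = ((w \<bullet>c v) \<cdot>\<^sub>m outer u x) $$ (i,j)"
    using assms ij by (simp add: cprod_sum)
  finally show "(outer u v * outer w x) $$ (i,j) = ((w \<bullet>c v) \<cdot>\<^sub>m outer u x) $$ (i,j)" .
qed (use assms in auto)

lemma outer_adj:
  assumes "u \<in> carrier_vec n" "v \<in> carrier_vec n"
  shows "mat_adjoint (outer u v) = outer v u"
  by (rule eq_matI) (use assms in auto)

lemma kb_proj:
  assumes "u \<in> carrier_vec n" "u \<bullet>c u = 1"
  shows "orth_projector n (ket_bra u)"
  unfolding orth_projector_def kb_outer using assms outer_mult[OF assms(1,1,1,1)] outer_adj[OF assms(1,1)]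
  by simp

lemma cnj_cprod:
  assumes "v \<in> carrier_vec n" "w \<in> carrier_vec n"
  shows "w \<bullet>c v = cnj (v \<bullet>c w)"
  using assms by (simp add: cprod_sum mult.commute)

lemma sum_proj:
  assumes u: "u \<in> carrier_vec n" and v: "v \<in> carrier_vec n" and uu: "u \<bullet>c u = 1" and vv: "v \<bullet>c v = 1" and uv: "u \<bullet>c v = 0"
  shows "orth_projector n (ket_bra u + ket_bra v)"
proof -
  have vu: "v \<bullet>c u = 0" using cnj_cprod[OF u v] uv by simp
  have c: "ket_bra u \<in> carrier_mat n n" "ket_bra v \<in> carrier_mat n n" using u v unfolding kb_outer by auto
  have a: "mat_adjoint (ket_bra u + ket_bra v) = ket_bra u + ket_bra v"
    by (rule eq_matI) (use u v in \<open>auto simp: kb_outer\<close>)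
  have m1: "ket_bra u * ket_bra u = ket_bra u" unfolding kb_outer outer_mult[OF u u u u] uu by simp
  have m2: "ket_bra v * ket_bra v = ket_bra v" unfolding kb_outer outer_mult[OF v v v v] vv by simp
  have m3: "ket_bra u * ket_bra v = 0\<^sub>m n n" unfolding kb_outer outer_mult[OF u u v v] vu
    by (rule eq_matI) (use u in auto)
  have m4: "ket_bra v * ket_bra u = 0\<^sub>m n n" unfolding kb_outer outer_mult[OF v v u u] uv
    by (rule eq_matI) (use v in auto)
  have cc: "ket_bra u + ket_bra v \<in> carrier_mat n n" using c by simp
  have sq: "(ket_bra u + ket_bra v) * (ket_bra u + ket_bra v) = ket_bra u + ket_bra v"
  proof (rule eq_matI)
    fix i j assume "i < dim_row (ket_bra u + ket_bra v)" "j < dim_col (ket_bra u + ket_bra v)"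
    hence ij: "i < n" "j < n" using c by auto
    have "((ket_bra u + ket_bra v) * (ket_bra u + ket_bra v)) $$ (i,j) =
      (ket_bra u * ket_bra u) $$ (i,j) + (ket_bra u * ket_bra v) $$ (i,j) + ((ket_bra v * ket_bra u) $$ (i,j) + (ket_bra v * ket_bra v) $$ (i,j))"
      using e_ml_add[OF c(1,2) cc ij] e_mr_add[OF c(1,2) c(1) ij] e_mr_add[OF c(1,2) c(2) ij] by simp
    also have "\<dots> = (ket_bra u + ket_bra v) $$ (i,j)"
      unfolding m1 m2 m3 m4 using c ij by simp
    finally show "((ket_bra u + ket_bra v) * (ket_bra u + ket_bra v)) $$ (i,j) = (ket_bra u + ket_bra v) $$ (i,j)" .
  qed (use c in auto)
  show ?thesis unfolding orth_projector_def using a cc sq by blast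
qed


lemma lin_aux2:
  fixes a b c :: complex
  assumes h1: "a + b + c = 0" and h2: "a - b - c = 0" and h3: "4 * a + 2 * b + 8 * c = 0"
  shows "a = 0" "b = - c" "c = 0"
proof -
  have "2 * a = (a + b + c) + (a - b - c)" by (simp add: algebra_simps)
  hence "2 * a = 0" using h1 h2 by simp
  thus a0: "a = 0" by simp
  from h1 a0 show bc: "b = - c" by (simp add: eq_neg_iff_add_eq_0)
  have "6 * c = 4 * a + 2 * b + 8 * c" using a0 bc by (simp add: algebra_simps)
  hence "6 * c = 0" using h3 by simp
  thus "c = 0" by simp
qed

lemma kb_comb:
  assumes u: "u \<in> carrier_vec n" and v: "v \<in> carrier_vec n"
  shows "ket_bra (u + complex_of_real t \<cdot>\<^sub>v v) =
    ket_bra u + (complex_of_real t * complex_of_real t) \<cdot>\<^sub>m ket_bra v + complex_of_real t \<cdot>\<^sub>m (outer u v + outer v u)"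
  by (rule eq_matI) (use u v in \<open>auto simp: kb_outer outer_def algebra_simps\<close>)

lemma norm_comb:
  assumes u: "u \<in> carrier_vec n" and v: "v \<in> carrier_vec n" and uu: "u \<bullet>c u = 1" and vv: "v \<bullet>c v = 1"
    and uv: "u \<bullet>c v = 0"
  shows "(u + complex_of_real t \<cdot>\<^sub>v v) \<bullet>c (u + complex_of_real t \<cdot>\<^sub>v v) = 1 + complex_of_real t * complex_of_real t"
proof -
  let ?T = "complex_of_real t"
  have vu: "v \<bullet>c u = 0" using cnj_cprod[OF u v] uv by simp
  have w: "u + ?T \<cdot>\<^sub>v v \<in> carrier_vec n" using u v by simp
  have "(u + ?T \<cdot>\<^sub>v v) \<bullet>c (u + ?T \<cdot>\<^sub>v v) = (\<Sum>k<n. (u $ k + ?T * v $ k) * cnj (u $ k + ?T * v $ k))"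
    using u v by (simp add: cprod_sum[OF w])
  also have "\<dots> = (\<Sum>k<n. u $ k * cnj (u $ k)) + ?T * (\<Sum>k<n. v $ k * cnj (u $ k))
     + ?T * (\<Sum>k<n. u $ k * cnj (v $ k)) + (?T * ?T) * (\<Sum>k<n. v $ k * cnj (v $ k))"
    by (simp add: sum.distrib sum_distrib_left algebra_simps)
  also have "\<dots> = 1 + ?T * ?T"
    using uu vv uv vu u v by (simp add: cprod_sum)
  finally show ?thesis .
qed

lemma kb_smult:
  assumes w: "w \<in> carrier_vec n"
  shows "ket_bra (complex_of_real c \<cdot>\<^sub>v w) = (complex_of_real (c * c)) \<cdot>\<^sub>m ket_bra w"
  by (rule eq_matI) (use w in \<open>auto simp: kb_outer outer_def algebra_simps\<close>)

lemma cprod_smult: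
  assumes w: "w \<in> carrier_vec n"
  shows "(complex_of_real c \<cdot>\<^sub>v w) \<bullet>c (complex_of_real c \<cdot>\<^sub>v w) = complex_of_real (c * c) * (w \<bullet>c w)"
proof -
  have "(complex_of_real c \<cdot>\<^sub>v w) \<bullet>c (complex_of_real c \<cdot>\<^sub>v w) = (\<Sum>k<n. (complex_of_real c * w $ k) * cnj (complex_of_real c * w $ k))"
    using w by (simp add: cprod_sum[of _ n])
  also have "\<dots> = complex_of_real (c * c) * (\<Sum>k<n. w $ k * cnj (w $ k))"
    by (simp add: sum_distrib_left algebra_simps)
  finally show ?thesis using w by (simp add: cprod_sum)
qed


definition tr :: "complex mat \<Rightarrow> complex" where "tr M = (\<Sum>i<dim_row M. M $$ (i,i))"

lemma tr_add: "A \<in> carrier_mat n n \<Longrightarrow> B \<in> carrier_mat n n \<Longrightarrow> tr (A + B) = tr A + tr B"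
  unfolding tr_def by (simp add: sum.distrib)

lemma tr_smult: "A \<in> carrier_mat n n \<Longrightarrow> tr (c \<cdot>\<^sub>m A) = c * tr A"
  unfolding tr_def by (simp add: sum_distrib_left)

lemma tr_one: "tr (1\<^sub>m n) = of_nat n"
  unfolding tr_def by simp

lemma tr_zero: "tr (0\<^sub>m n n) = 0"
  unfolding tr_def by simp

lemma tr_comm:
  assumes A: "A \<in> carrier_mat n m" and B: "B \<in> carrier_mat m n"
  shows "tr (A * B) = tr (B * A)"
proof -
  have "tr (A * B) = (\<Sum>i<n. \<Sum>k<m. A $$ (i,k) * B $$ (k,i))"
    unfolding tr_def using A B by (simp add: scalar_prod_def atLeast0LessThan)
  also have "\<dots> = (\<Sum>k<m. \<Sum>i<n. B $$ (k,i) * A $$ (i,k))"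
    by (subst sum.swap) (simp add: mult.commute)
  also have "\<dots> = tr (B * A)"
    unfolding tr_def using A B by (simp add: scalar_prod_def atLeast0LessThan)
  finally show ?thesis .
qed

lemma rank_trace:
  assumes P: "P \<in> carrier_mat n n" and PP: "P * P = P"
  shows "of_nat (vec_space.rank n P) = tr P"
proof -
  interpret vec_space "TYPE(complex)" n .
  let ?C = "set (cols P)"
  have Ccarr: "?C \<subseteq> carrier_vec n" using P cols_dim by blast
  obtain S where S: "maximal S (\<lambda>T. T \<subseteq> ?C \<and> lin_indpt T)"
    using maximal_exists[of "(\<lambda>T. T \<subseteq> ?C \<and> lin_indpt T)" "card ?C" "{}"]
    by (meson List.finite_set card_mono empty_iff empty_subsetI finite_lin_indpt2 rev_finite_subset)
  have rk: "rank P = card S" using rank_card_indpt[OF P S] .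
  have SC: "S \<subseteq> ?C" and Sli: "lin_indpt S" using S unfolding maximal_def by auto
  have Scarr: "S \<subseteq> carrier_vec n" using SC Ccarr by auto
  have finS: "finite S" using SC finite_subset by blast
  have Cspan: "?C \<subseteq> span S"
  proof
    fix s assume s: "s \<in> ?C"
    show "s \<in> span S"
    proof (rule ccontr)
      assume ns: "s \<notin> span S"
      have sS: "s \<notin> S" using ns Scarr span_mem by auto
      have "lin_indpt (insert s S)"
        using lin_dep_iff_in_span[OF Scarr Sli, of s] ns sS s Ccarr
        by (metis Un_insert_right subsetD sup_bot.right_neutral)
      hence "insert s S \<subseteq> ?C \<and> lin_indpt (insert s S)" using SC s by auto
      with S sS show False unfolding maximal_def by blast
    qed
  qed
  obtain bs where bs: "set bs = S" "distinct bs" using finite_distinct_list[OF finS] by blast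
  define r where "r = length bs"
  have cardS: "card S = r" using bs distinct_card r_def by metis
  define X where "X = mat_of_cols n bs"
  have Xc: "X \<in> carrier_mat n r" unfolding X_def r_def by simp
  have colsX: "cols X = bs" unfolding X_def using bs Scarr by simp
  have colX: "\<And>j. j < r \<Longrightarrow> col X j = bs ! j" unfolding X_def r_def
    using bs Scarr by (metis col_mat_of_cols nth_mem subsetD)
  have "\<exists>y. y \<in> carrier_vec r \<and> X *\<^sub>v y = col P j" if j: "j < n" for j
  proof -
    have "col P j \<in> ?C" using j P by (simp add: cols_def)
    hence "col P j \<in> span S" using Cspan by auto
    hence "col P j \<in> col_space X" unfolding col_space_def colsX bs(1) .
    thus ?thesis unfolding col_space_eq[OF Xc] using Xc by auto
  qed
  then obtain yf where yf: "\<And>j. j < n \<Longrightarrow> yf j \<in> carrier_vec r \<and> X *\<^sub>v yf j = col P j" by metis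
  define Y where "Y = mat_of_cols r (map yf [0..<n])"
  have Yc: "Y \<in> carrier_mat r n" unfolding Y_def using mat_of_cols_carrier(1)[of r "map yf [0..<n]"] by simp
  have colY: "\<And>j. j < n \<Longrightarrow> col Y j = yf j" unfolding Y_def using yf by simp
  have XY: "X * Y = P"
  proof (rule eq_matI)
    fix i j assume "i < dim_row P" "j < dim_col P"
    hence ij: "i < n" "j < n" using P by auto
    have "(X * Y) $$ (i,j) = (X *\<^sub>v col Y j) $ i" using Xc Yc ij by simp
    also have "\<dots> = col P j $ i" using colY yf ij by simp
    also have "\<dots> = P $$ (i,j)" using P ij by simp
    finally show "(X * Y) $$ (i,j) = P $$ (i,j)" .
  qed (use Xc Yc P in auto)
  have PX: "P * X = X"
  proof (rule eq_matI)
    fix i j assume "i < dim_row X" "j < dim_col X"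
    hence ij: "i < n" "j < r" using Xc by auto
    have "bs ! j \<in> ?C" using bs SC ij r_def by auto
    then obtain k where k: "k < n" "bs ! j = col P k" using P by (auto simp: cols_def)
    have "(P * X) $$ (i,j) = (P *\<^sub>v col X j) $ i" using Xc P ij by simp
    also have "\<dots> = (P *\<^sub>v col P k) $ i" using colX ij k by simp
    also have "P *\<^sub>v col P k = col (P * P) k" by (rule col_mult2[symmetric, OF P P k(1)])
    also have "\<dots> = col X j" using PP colX ij k by simp
    finally show "(P * X) $$ (i,j) = X $$ (i,j)" using Xc ij by simp
  qed (use Xc P in auto)
  have YX: "Y * X = 1\<^sub>m r"
  proof -
    have "X * (Y * X) = X"
      using XY PX Xc Yc by (metis assoc_mult_mat)
    have "col (Y * X) j = col (1\<^sub>m r) j" if j: "j < r" for j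
    proof (rule ccontr)
      assume ne: "col (Y * X) j \<noteq> col (1\<^sub>m r) j"
      have c1: "col (Y * X) j \<in> carrier_vec r" using Yc Xc by (metis carrier_matD(1) col_dim index_mult_mat(2))
      have c2: "col (1\<^sub>m r) j \<in> carrier_vec r" using j by simp
      define c where "c = col (Y * X) j - col (1\<^sub>m r) j"
      have cc: "c \<in> carrier_vec r" unfolding c_def by (rule minus_carrier_vec[OF c1 c2])
      have c0: "c \<noteq> 0\<^sub>v r"
      proof
        assume cz: "c = 0\<^sub>v r"
        have "col (Y * X) j = col (1\<^sub>m r) j"
        proof (rule eq_vecI)
          fix i assume "i < dim_vec (col (1\<^sub>m r) j)"
          hence i: "i < r" using c2 by simp
          have "c $ i = 0" using cz i by simp
          moreover have "c $ i = col (Y * X) j $ i - col (1\<^sub>m r) j $ i"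
            unfolding c_def using c2 i by simp
          ultimately show "col (Y * X) j $ i = col (1\<^sub>m r) j $ i" by simp
        qed (use c1 c2 Yc in simp)
        with ne show False by simp
      qed
      have "X *\<^sub>v c = X *\<^sub>v col (Y * X) j - X *\<^sub>v col (1\<^sub>m r) j"
        unfolding c_def by (rule mult_minus_distrib_mat_vec[OF Xc c1 c2])
      also have "X *\<^sub>v col (Y * X) j = col (X * (Y * X)) j"
        using Xc Yc j by (metis col_mult2 mult_carrier_mat)
      also have "\<dots> = col X j" using \<open>X * (Y * X) = X\<close> by simp
      also have "X *\<^sub>v col (1\<^sub>m r) j = col (X * 1\<^sub>m r) j" using Xc j by (metis col_mult2 one_carrier_mat)
      also have "\<dots> = col X j" using Xc by simp
      finally have "X *\<^sub>v c = 0\<^sub>v n" using Xc j by simp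
      from lin_depI[OF Xc cc c0 this] colsX bs Sli show False by simp
    qed
    thus ?thesis using Xc Yc by (intro mat_col_eqI) auto
  qed
  have "tr P = tr (Y * X)" using XY tr_comm[OF Xc Yc] by simp
  also have "\<dots> = of_nat r" using YX tr_one by simp
  finally show ?thesis using rk cardS by simp
qed


lemma pair_rel:
  assumes lin: "linear_map_mat d1 d2 f" and up: "unitarity_preserving d1 d2 f" and f1: "f (1\<^sub>m d1) = 1\<^sub>m d2"
    and u: "u \<in> carrier_vec d1" and v: "v \<in> carrier_vec d1"
    and uu: "u \<bullet>c u = 1" and vv: "v \<bullet>c v = 1" and uv: "u \<bullet>c v = 0"
  shows "tr (f (ket_bra u)) = tr (f (ket_bra v))" and "f (ket_bra u) * f (ket_bra v) = 0\<^sub>m d2 d2"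
proof -
  define A where "A = f (ket_bra u)"
  define B where "B = f (ket_bra v)"
  define Z where "Z = outer u v + outer v u"
  define S where "S = f Z"
  have kuc: "ket_bra u \<in> carrier_mat d1 d1" and kvc: "ket_bra v \<in> carrier_mat d1 d1"
    using u v by (auto simp: kb_outer)
  have Zc: "Z \<in> carrier_mat d1 d1" unfolding Z_def using u v by auto
  have Ac: "A \<in> carrier_mat d2 d2" unfolding A_def using lin_D(1)[OF lin kuc] .
  have Bc: "B \<in> carrier_mat d2 d2" unfolding B_def using lin_D(1)[OF lin kvc] .
  have Sc: "S \<in> carrier_mat d2 d2" unfolding S_def using lin_D(1)[OF lin Zc] .
  have PA: "orth_projector d2 A" unfolding A_def by (rule proj_image[OF lin up f1 kb_proj[OF u uu]])
  have PB: "orth_projector d2 B" unfolding B_def by (rule proj_image[OF lin up f1 kb_proj[OF v vv]])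
  have AA: "A * A = A" and BB: "B * B = B" using PA PB unfolding orth_projector_def by auto
  have PAB: "orth_projector d2 (A + B)"
    using proj_image[OF lin up f1 sum_proj[OF u v uu vv uv]] lin_D(2)[OF lin kuc kvc]
    unfolding A_def B_def by simp
  have anti: "(A * B) $$ (i,j) + (B * A) $$ (i,j) = 0" if ij: "i < d2" "j < d2" for i j
  proof -
    have "(A + B) * (A + B) = A + B" using PAB unfolding orth_projector_def by simp
    hence "((A + B) * (A + B)) $$ (i,j) = (A + B) $$ (i,j)" by simp
    moreover have "((A + B) * (A + B)) $$ (i,j) = (A * A) $$ (i,j) + (B * B) $$ (i,j) + ((A * B) $$ (i,j) + (B * A) $$ (i,j))"
      using Ac Bc ij by (simp add: e_rules[where n=d2] algebra_simps del: index_mult_mat(1))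
    ultimately show ?thesis unfolding AA BB using Ac Bc ij by simp
  qed
  define N where "N = A * B"
  define M where "M = B * A"
  have Nc: "N \<in> carrier_mat d2 d2" and Mc: "M \<in> carrier_mat d2 d2" unfolding N_def M_def using Ac Bc by auto
  have NM0: "N + M = 0\<^sub>m d2 d2"
  proof (rule eq_matI)
    fix i j assume "i < dim_row (0\<^sub>m d2 d2 :: complex mat)" "j < dim_col (0\<^sub>m d2 d2 :: complex mat)"
    hence ij: "i < d2" "j < d2" by auto
    have "(N + M) $$ (i,j) = N $$ (i,j) + M $$ (i,j)" using Nc Mc ij by (metis carrier_matD index_add_mat(1))
    also have "\<dots> = 0" using anti[OF ij] unfolding N_def M_def .
    finally show "(N + M) $$ (i,j) = 0\<^sub>m d2 d2 $$ (i,j)" using ij by simp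
  qed (use Nc Mc in auto)
  have AN: "A * N = N" unfolding N_def using Ac Bc AA by (metis assoc_mult_mat)
  have MA: "M * A = M" unfolding M_def using Ac Bc AA by (metis assoc_mult_mat)
  have NA: "N * A = A * M" unfolding N_def M_def using Ac Bc by (metis assoc_mult_mat)
  have NMz: "N $$ (i,j) = 0 \<and> M $$ (i,j) = 0" if ij: "i < d2" "j < d2" for i j
  proof -
    have "A * (N + M) = 0\<^sub>m d2 d2" unfolding NM0 using Ac by simp
    hence "(A * (N + M)) $$ (i,j) = 0" using ij by simp
    hence e1: "N $$ (i,j) + (A * M) $$ (i,j) = 0"
      using e_mr_add[OF Nc Mc Ac ij] AN by simp
    have "(N + M) * A = 0\<^sub>m d2 d2" unfolding NM0 using Ac by simp
    hence "((N + M) * A) $$ (i,j) = 0" using ij by simp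
    hence e2: "(A * M) $$ (i,j) + M $$ (i,j) = 0"
      using e_ml_add[OF Nc Mc Ac ij] NA MA by simp
    have e3: "N $$ (i,j) + M $$ (i,j) = 0" using arg_cong[OF NM0, of "\<lambda>X. X $$ (i,j)"] Nc Mc ij by simp
    from e1 e2 have "N $$ (i,j) = M $$ (i,j)" by (metis add.commute add_left_cancel)
    with e3 have "N $$ (i,j) + N $$ (i,j) = 0" by simp
    hence "N $$ (i,j) = 0" by simp
    with e3 show ?thesis by simp
  qed
  have AB0: "A * B = 0\<^sub>m d2 d2"
    by (rule eq_matI) (use NMz Nc in \<open>auto simp: N_def simp del: index_mult_mat(1)\<close>)
  have BA0: "B * A = 0\<^sub>m d2 d2"
    by (rule eq_matI) (use NMz Mc in \<open>auto simp: M_def simp del: index_mult_mat(1)\<close>)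
  \<comment> \<open>the relations coming from the projectors onto u + t v\<close>
  have rel: "(complex_of_real t * complex_of_real t) * ((S * S) $$ (i,j) - A $$ (i,j) - B $$ (i,j))
     + complex_of_real t * ((A * S) $$ (i,j) + (S * A) $$ (i,j) - S $$ (i,j))
     + (complex_of_real t * complex_of_real t * complex_of_real t) * ((B * S) $$ (i,j) + (S * B) $$ (i,j) - S $$ (i,j)) = 0"
    if ij: "i < d2" "j < d2" for t i j
  proof -
    define T where "T = complex_of_real t"
    define c where "c = 1 / sqrt (1 + t * t)"
    have pos: "1 + t * t > 0" by (simp add: add_pos_nonneg)
    have cc: "c * c * (1 + t * t) = 1" unfolding c_def using pos
      by (simp add: field_simps)
    define w where "w = u + T \<cdot>\<^sub>v v"
    have wc: "w \<in> carrier_vec d1" unfolding w_def using u v by simp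
    define y where "y = complex_of_real c \<cdot>\<^sub>v w"
    have yc: "y \<in> carrier_vec d1" unfolding y_def using wc by simp
    have "y \<bullet>c y = complex_of_real (c * c) * (w \<bullet>c w)"
      unfolding y_def by (rule cprod_smult[OF wc])
    also have "w \<bullet>c w = 1 + T * T"
      unfolding w_def T_def by (rule norm_comb[OF u v uu vv uv])
    also have "complex_of_real (c * c) * (1 + T * T) = complex_of_real (c * c * (1 + t * t))" unfolding T_def by simp
    also have "\<dots> = 1" using cc by simp
    finally have yy: "y \<bullet>c y = 1" .
    define G where "G = A + (T * T) \<cdot>\<^sub>m B + T \<cdot>\<^sub>m S"
    have Gc: "G \<in> carrier_mat d2 d2" unfolding G_def using Ac Bc Sc by simp
    have "ket_bra y = complex_of_real (c * c) \<cdot>\<^sub>m ket_bra w"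
      unfolding y_def by (rule kb_smult[OF wc])
    also have "ket_bra w = ket_bra u + (T * T) \<cdot>\<^sub>m ket_bra v + T \<cdot>\<^sub>m Z"
      unfolding w_def T_def Z_def by (rule kb_comb[OF u v])
    finally have "ket_bra y = complex_of_real (c * c) \<cdot>\<^sub>m (ket_bra u + (T * T) \<cdot>\<^sub>m ket_bra v + T \<cdot>\<^sub>m Z)" .
    hence ky: "ket_bra y = complex_of_real (c * c) \<cdot>\<^sub>m (ket_bra u + (T * T) \<cdot>\<^sub>m ket_bra v + T \<cdot>\<^sub>m Z)" .
    have c1: "ket_bra u + (T * T) \<cdot>\<^sub>m ket_bra v \<in> carrier_mat d1 d1" using kuc kvc by simp
    have c2: "T \<cdot>\<^sub>m Z \<in> carrier_mat d1 d1" using Zc by simp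
    have c3: "(T * T) \<cdot>\<^sub>m ket_bra v \<in> carrier_mat d1 d1" using kvc by simp
    have "f (ket_bra u + (T * T) \<cdot>\<^sub>m ket_bra v + T \<cdot>\<^sub>m Z) = f (ket_bra u + (T * T) \<cdot>\<^sub>m ket_bra v) + f (T \<cdot>\<^sub>m Z)"
      by (rule lin_D(2)[OF lin c1 c2])
    also have "f (ket_bra u + (T * T) \<cdot>\<^sub>m ket_bra v) = A + f ((T * T) \<cdot>\<^sub>m ket_bra v)"
      unfolding A_def by (rule lin_D(2)[OF lin kuc c3])
    also have "f ((T * T) \<cdot>\<^sub>m ket_bra v) = (T * T) \<cdot>\<^sub>m B" unfolding B_def by (rule lin_D(3)[OF lin kvc])
    also have "f (T \<cdot>\<^sub>m Z) = T \<cdot>\<^sub>m S" unfolding S_def by (rule lin_D(3)[OF lin Zc])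
    finally have fM: "f (ket_bra u + (T * T) \<cdot>\<^sub>m ket_bra v + T \<cdot>\<^sub>m Z) = G" unfolding G_def .
    have "f (ket_bra y) = complex_of_real (c * c) \<cdot>\<^sub>m G"
      unfolding ky fM[symmetric] by (rule lin_D(3)[OF lin]) (use c1 c2 in simp)
    hence PG: "orth_projector d2 (complex_of_real (c * c) \<cdot>\<^sub>m G)"
      using proj_image[OF lin up f1 kb_proj[OF yc yy]] by simp
    define C where "C = complex_of_real (c * c)"
    have C1: "C * (1 + T * T) = 1" unfolding C_def T_def using cc
      by (metis of_real_1 of_real_add of_real_mult)
    have "(C \<cdot>\<^sub>m G) * (C \<cdot>\<^sub>m G) = C \<cdot>\<^sub>m G" using PG unfolding orth_projector_def C_def by simp
    hence "((C \<cdot>\<^sub>m G) * (C \<cdot>\<^sub>m G)) $$ (i,j) = (C \<cdot>\<^sub>m G) $$ (i,j)" by simp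
    hence "C * (C * (G * G) $$ (i,j)) = C * G $$ (i,j)"
      using Gc ij by (simp add: e_rules[where n=d2] del: index_mult_mat(1))
    moreover have Cn: "C \<noteq> 0" using C1 by auto
    ultimately have "C * (G * G) $$ (i,j) = G $$ (i,j)" by simp
    hence "(1 + T * T) * (C * (G * G) $$ (i,j)) = (1 + T * T) * G $$ (i,j)" by simp
    moreover have "(1 + T * T) * (C * (G * G) $$ (i,j)) = (C * (1 + T * T)) * (G * G) $$ (i,j)"
      by (simp only: mult.assoc mult.commute mult.left_commute)
    ultimately have GG: "(G * G) $$ (i,j) = (1 + T * T) * G $$ (i,j)"
      using C1 by simp
    have "(G * G) $$ (i,j) = (A * A) $$ (i,j) + (T * T) * ((A * B) $$ (i,j) + (B * A) $$ (i,j))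
      + T * ((A * S) $$ (i,j) + (S * A) $$ (i,j)) + (T * T) * (T * T) * (B * B) $$ (i,j)
      + (T * T) * T * ((B * S) $$ (i,j) + (S * B) $$ (i,j)) + (T * T) * (S * S) $$ (i,j)"
      unfolding G_def using Ac Bc Sc ij by (simp add: e_rules[where n=d2] algebra_simps del: index_mult_mat(1))
    also have "\<dots> = A $$ (i,j) + T * ((A * S) $$ (i,j) + (S * A) $$ (i,j)) + (T * T) * (T * T) * B $$ (i,j)
      + (T * T) * T * ((B * S) $$ (i,j) + (S * B) $$ (i,j)) + (T * T) * (S * S) $$ (i,j)"
      unfolding AA BB using anti[OF ij] by simp
    finally have L: "(G * G) $$ (i,j) = \<dots>" .
    have R: "(1 + T * T) * G $$ (i,j) = (1 + T * T) * (A $$ (i,j) + (T * T) * B $$ (i,j) + T * S $$ (i,j))"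
      unfolding G_def using Ac Bc Sc ij by simp
    from GG L R show ?thesis unfolding T_def[symmetric] by (simp add: algebra_simps)
  qed
  have SS: "S * S = A + B" and ASSA: "A * S + S * A = S"
  proof -
    have x: "(S * S) $$ (i,j) = A $$ (i,j) + B $$ (i,j) \<and> (A * S) $$ (i,j) + (S * A) $$ (i,j) = S $$ (i,j)"
      if ij: "i < d2" "j < d2" for i j
    proof -
      note r1 = rel[OF ij, of 1] and r2 = rel[OF ij, of "-1"] and r3 = rel[OF ij, of 2]
      let ?E = "(S * S) $$ (i,j) - A $$ (i,j) - B $$ (i,j)"
      let ?D1 = "(A * S) $$ (i,j) + (S * A) $$ (i,j) - S $$ (i,j)"
      let ?D2 = "(B * S) $$ (i,j) + (S * B) $$ (i,j) - S $$ (i,j)"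
      have h1: "?E + ?D1 + ?D2 = 0" using r1 by simp
      have h2: "?E - ?D1 - ?D2 = 0" using r2 by (simp add: algebra_simps)
      have h3: "4 * ?E + 2 * ?D1 + 8 * ?D2 = 0" using r3 by (simp add: algebra_simps)
      note l = lin_aux2[OF h1 h2 h3]
      have E0: "?E = 0" and D0: "?D1 = 0" using l by simp_all
      show ?thesis using E0 D0 by (metis diff_diff_eq eq_iff_diff_eq_0)
    qed
    show "S * S = A + B" by (rule eq_matI) (use x Ac Bc Sc in \<open>auto simp del: index_mult_mat(1)\<close>)
    show "A * S + S * A = S" by (rule eq_matI) (use x Ac Bc Sc in \<open>auto simp del: index_mult_mat(1)\<close>)
  qed
  have ASc: "A * S \<in> carrier_mat d2 d2" and SAc: "S * A \<in> carrier_mat d2 d2" using Ac Sc by auto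
  have "(A * S) * S + (S * A) * S = (A * S + S * A) * S"
    by (rule add_mult_distrib_mat[OF ASc SAc Sc, symmetric])
  also have "\<dots> = S * S" using ASSA by simp
  finally have sum_eq: "(A * S) * S + (S * A) * S = A + B" using SS by simp
  have "tr ((A * S) * S) + tr ((S * A) * S) = tr (A + B)"
    using tr_add[of "(A * S) * S" d2 "(S * A) * S"] ASc SAc Sc sum_eq by (metis mult_carrier_mat)
  moreover have "tr ((A * S) * S) = tr A"
  proof -
    have "(A * S) * S = A * (S * S)" by (rule assoc_mult_mat[OF Ac Sc Sc])
    also have "\<dots> = A * (A + B)" using SS by simp
    also have "\<dots> = A * A + A * B" by (rule mult_add_distrib_mat[OF Ac Ac Bc])
    also have "\<dots> = A" unfolding AA AB0 using Ac by simp
    finally show ?thesis by simp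
  qed
  moreover have "tr ((S * A) * S) = tr A"
  proof -
    have "tr ((S * A) * S) = tr (S * (S * A))" by (rule tr_comm[OF SAc Sc])
    also have "S * (S * A) = (S * S) * A" by (rule assoc_mult_mat[OF Sc Sc Ac, symmetric])
    also have "\<dots> = (A + B) * A" using SS by simp
    also have "\<dots> = A * A + B * A" by (rule add_mult_distrib_mat[OF Ac Bc Ac])
    also have "\<dots> = A" unfolding AA BA0 using Ac by simp
    finally show ?thesis .
  qed
  ultimately have "tr A + tr A = tr A + tr B" using tr_add[OF Ac Bc] by simp
  thus "tr (f (ket_bra u)) = tr (f (ket_bra v))" unfolding A_def B_def by simp
  show "f (ket_bra u) * f (ket_bra v) = 0\<^sub>m d2 d2" using AB0 unfolding A_def B_def .
qed


fun msum :: "(nat \<Rightarrow> complex mat) \<Rightarrow> nat \<Rightarrow> nat \<Rightarrow> complex mat" where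
  "msum F n 0 = 0\<^sub>m n n"
| "msum F n (Suc m) = msum F n m + F m"

lemma msum_carrier: "(\<And>k. k < m \<Longrightarrow> F k \<in> carrier_mat n n) \<Longrightarrow> msum F n m \<in> carrier_mat n n"
  by (induction m) auto

lemma msum_index:
  assumes "\<And>k. k < m \<Longrightarrow> F k \<in> carrier_mat n n" "i < n" "j < n"
  shows "msum F n m $$ (i,j) = (\<Sum>k<m. F k $$ (i,j))"
  using assms
proof (induction m)
  case 0 then show ?case by simp
next
  case (Suc m)
  have c1: "msum F n m \<in> carrier_mat n n" using Suc.prems(1) by (intro msum_carrier) auto
  have c2: "F m \<in> carrier_mat n n" using Suc.prems(1) by auto
  have "msum F n (Suc m) $$ (i,j) = msum F n m $$ (i,j) + F m $$ (i,j)"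
    using c1 c2 Suc.prems(2,3) by simp
  also have "msum F n m $$ (i,j) = (\<Sum>k<m. F k $$ (i,j))"
    using Suc.IH Suc.prems by auto
  finally show ?case by simp
qed

lemma f_zero:
  assumes lin: "linear_map_mat d1 d2 f"
  shows "f (0\<^sub>m d1 d1) = 0\<^sub>m d2 d2"
proof -
  have z: "(0::complex) \<cdot>\<^sub>m 0\<^sub>m d1 d1 = 0\<^sub>m d1 d1" by (rule eq_matI) auto
  have c: "f (0\<^sub>m d1 d1) \<in> carrier_mat d2 d2" using lin_D(1)[OF lin] by simp
  have "f (0\<^sub>m d1 d1) = f ((0::complex) \<cdot>\<^sub>m 0\<^sub>m d1 d1)" using z by simp
  also have "\<dots> = 0 \<cdot>\<^sub>m f (0\<^sub>m d1 d1)" by (rule lin_D(3)[OF lin]) simp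
  also have "\<dots> = 0\<^sub>m d2 d2" by (rule eq_matI) (use c in auto)
  finally show ?thesis .
qed

lemma msum_f:
  assumes lin: "linear_map_mat d1 d2 f" and F: "\<And>k. k < m \<Longrightarrow> F k \<in> carrier_mat d1 d1"
  shows "f (msum F d1 m) = msum (\<lambda>k. f (F k)) d2 m"
  using F
proof (induction m)
  case 0 then show ?case using f_zero[OF lin] by simp
next
  case (Suc m)
  have c1: "msum F d1 m \<in> carrier_mat d1 d1" using Suc.prems by (intro msum_carrier) auto
  have c2: "F m \<in> carrier_mat d1 d1" using Suc.prems by auto
  show ?case using lin_D(2)[OF lin c1 c2] Suc by simp
qed

lemma msum_tr:
  assumes "\<And>k. k < m \<Longrightarrow> F k \<in> carrier_mat n n"
  shows "tr (msum F n m) = (\<Sum>k<m. tr (F k))"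
  using assms
proof (induction m)
  case 0 then show ?case using tr_zero by simp
next
  case (Suc m)
  have c1: "msum F n m \<in> carrier_mat n n" using Suc.prems by (intro msum_carrier) auto
  have c2: "F m \<in> carrier_mat n n" using Suc.prems by auto
  show ?case using tr_add[OF c1 c2] Suc by simp
qed

lemma cprod_smult2:
  assumes x: "x \<in> carrier_vec n" and y: "y \<in> carrier_vec n"
  shows "(a \<cdot>\<^sub>v x) \<bullet>c (b \<cdot>\<^sub>v y) = a * cnj b * (x \<bullet>c y)"
proof -
  have "(a \<cdot>\<^sub>v x) \<bullet>c (b \<cdot>\<^sub>v y) = (\<Sum>k<n. (a * x $ k) * cnj (b * y $ k))"
    using x y by (simp add: cprod_sum[of _ n])
  also have "\<dots> = a * cnj b * (\<Sum>k<n. x $ k * cnj (y $ k))"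
    by (simp add: sum_distrib_left algebra_simps)
  finally show ?thesis using y by (simp add: cprod_sum)
qed

lemma cprod_self_real:
  assumes w: "w \<in> carrier_vec n"
  shows "w \<bullet>c w = complex_of_real (\<Sum>k<n. (cmod (w $ k))\<^sup>2)"
proof -
  have "w \<bullet>c w = (\<Sum>k<n. w $ k * cnj (w $ k))" by (rule cprod_sum[OF w])
  also have "\<dots> = (\<Sum>k<n. complex_of_real ((cmod (w $ k))\<^sup>2))"
    by (rule sum.cong) (rule refl, rule complex_norm_square[symmetric])
  also have "\<dots> = complex_of_real (\<Sum>k<n. (cmod (w $ k))\<^sup>2)" by (rule of_real_sum[symmetric])
  finally show ?thesis .
qed

lemma onb_ext:
  fixes u :: "complex vec"
  assumes u: "u \<in> carrier_vec n" and uu: "u \<bullet>c u = 1"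
  shows "\<exists>us. length us = n \<and> (\<forall>k<n. us ! k \<in> carrier_vec n) \<and> us ! 0 = u \<and>
     (\<forall>k<n. \<forall>l<n. us ! k \<bullet>c us ! l = (if k = l then 1 else 0))"
proof -
  interpret cof_vec_space n "TYPE(complex)" .
  have u0: "u \<noteq> 0\<^sub>v n"
  proof
    assume "u = 0\<^sub>v n"
    hence "u \<bullet>c u = 0" using cprod_sum[where w="0\<^sub>v n" and v="0\<^sub>v n" and n=n] by simp
    with uu show False by simp
  qed
  have npos: "n \<noteq> 0"
  proof
    assume "n = 0" hence "u \<bullet>c u = 0" using u by (simp add: cprod_sum)
    with uu show False by simp
  qed
  define b where "b = basis_completion u"
  note bc = basis_completion[OF u u0, folded b_def]
  from bc(6,7) npos obtain vs where bv: "b = u # vs" by (cases b) auto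
  define ws where "ws = gram_schmidt n b"
  note gs = gram_schmidt_result[OF bc(2) bc(4) bc(5) ws_def]
  have lws: "length ws = n" using gs(4) bc(6) by simp
  have hws: "ws ! 0 = u"
  proof -
    have "hd ws = u" unfolding ws_def bv by (rule gram_schmidt_hd[OF u])
    thus ?thesis using lws npos by (metis hd_conv_nth list.size(3))
  qed
  have wsc: "\<And>k. k < n \<Longrightarrow> ws ! k \<in> carrier_vec n" using gs(3) lws by auto
  have orth: "\<And>k l. k < n \<Longrightarrow> l < n \<Longrightarrow> (ws ! k \<bullet>c ws ! l = 0) = (k \<noteq> l)"
    using gs(2) lws unfolding corthogonal_def by auto
  define nr where "nr = (\<lambda>w. sqrt (\<Sum>k<n. (cmod (w $ k))\<^sup>2))"
  have nrpos: "nr (ws ! k) > 0" and nrsq: "nr (ws ! k) * nr (ws ! k) = (\<Sum>i<n. (cmod (ws ! k $ i))\<^sup>2)"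
    if k: "k < n" for k
  proof -
    have nz: "ws ! k \<bullet>c ws ! k \<noteq> 0" using orth[OF k k] by simp
    have ge: "(\<Sum>i<n. (cmod (ws ! k $ i))\<^sup>2) \<ge> 0" by (simp add: sum_nonneg)
    have ne: "(\<Sum>i<n. (cmod (ws ! k $ i))\<^sup>2) \<noteq> 0" using nz cprod_self_real[OF wsc[OF k]] by (metis of_real_0)
    show "nr (ws ! k) > 0" unfolding nr_def using ge ne by simp
    show "nr (ws ! k) * nr (ws ! k) = (\<Sum>i<n. (cmod (ws ! k $ i))\<^sup>2)" unfolding nr_def using ge by simp
  qed
  define us where "us = map (\<lambda>w. complex_of_real (1 / nr w) \<cdot>\<^sub>v w) ws"
  have lus: "length us = n" unfolding us_def using lws by simp
  have usk: "\<And>k. k < n \<Longrightarrow> us ! k = complex_of_real (1 / nr (ws ! k)) \<cdot>\<^sub>v ws ! k"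
    unfolding us_def using lws by simp
  have usc: "\<forall>k<n. us ! k \<in> carrier_vec n" using usk wsc by simp
  have us0: "us ! 0 = u"
  proof -
    have "complex_of_real (\<Sum>i<n. (cmod (u $ i))\<^sup>2) = complex_of_real 1" using uu cprod_self_real[OF u] by simp
    hence "(\<Sum>i<n. (cmod (u $ i))\<^sup>2) = 1" by (rule of_real_eq_iff[THEN iffD1])
    hence "nr u = 1" unfolding nr_def by simp
    thus ?thesis using usk[of 0] npos hws by simp
  qed
  have on: "\<forall>k<n. \<forall>l<n. us ! k \<bullet>c us ! l = (if k = l then 1 else 0)"
  proof (intro allI impI)
    fix k l assume k: "k < n" and l: "l < n"
    have "us ! k \<bullet>c us ! l = complex_of_real (1 / nr (ws ! k)) * cnj (complex_of_real (1 / nr (ws ! l))) * (ws ! k \<bullet>c ws ! l)"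
      unfolding usk[OF k] usk[OF l] by (rule cprod_smult2[OF wsc[OF k] wsc[OF l]])
    also have "\<dots> = (if k = l then 1 else 0)"
    proof (cases "k = l")
      case True
      have "ws ! k \<bullet>c ws ! k = complex_of_real (nr (ws ! k) * nr (ws ! k))"
        using cprod_self_real[OF wsc[OF k]] nrsq[OF k] by simp
      moreover have "(1 / nr (ws ! k)) * (1 / nr (ws ! k)) * (nr (ws ! k) * nr (ws ! k)) = 1"
        using nrpos[OF k] by (simp add: field_simps)
      ultimately show ?thesis using True
        by (metis complex_cnj_complex_of_real of_real_1 of_real_mult)
    next
      case False
      thus ?thesis using orth[OF k l] by simp
    qed
    finally show "us ! k \<bullet>c us ! l = (if k = l then 1 else 0)" .
  qed
  show ?thesis using lus usc us0 on by blast
qed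

lemma onb_sum:
  assumes lus: "length us = n" and usc: "\<forall>k<n. us ! k \<in> carrier_vec n"
    and on: "\<forall>k<n. \<forall>l<n. us ! k \<bullet>c us ! l = (if k = l then 1 else 0)"
  shows "msum (\<lambda>k. ket_bra (us ! k)) n n = 1\<^sub>m n"
proof -
  define U where "U = mat_of_cols n us"
  have Uc: "U \<in> carrier_mat n n" unfolding U_def using lus mat_of_cols_carrier(1)[of n us] by simp
  have Ui: "\<And>i k. i < n \<Longrightarrow> k < n \<Longrightarrow> U $$ (i,k) = us ! k $ i"
    unfolding U_def using lus by (simp add: mat_of_cols_def)
  have Ac: "mat_adjoint U \<in> carrier_mat n n" using Uc by simp
  have AU: "mat_adjoint U * U = 1\<^sub>m n"
  proof (rule eq_matI)
    fix k l assume "k < dim_row (1\<^sub>m n)" "l < dim_col (1\<^sub>m n)"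
    hence kl: "k < n" "l < n" by auto
    have "(mat_adjoint U * U) $$ (k,l) = (\<Sum>i<n. cnj (U $$ (i,k)) * U $$ (i,l))"
      using Uc kl by (simp add: scalar_prod_def atLeast0LessThan)
    also have "\<dots> = (\<Sum>i<n. us ! l $ i * cnj (us ! k $ i))"
      using Ui kl by (simp add: mult.commute)
    also have "\<dots> = us ! l \<bullet>c us ! k" using usc kl cprod_sum[where w="us ! k" and v="us ! l" and n=n] by simp
    also have "\<dots> = 1\<^sub>m n $$ (k,l)" using on kl by simp
    finally show "(mat_adjoint U * U) $$ (k,l) = 1\<^sub>m n $$ (k,l)" .
  qed (use Uc in auto)
  have UA: "U * mat_adjoint U = 1\<^sub>m n" by (rule mat_mult_left_right_inverse[OF Ac Uc AU])
  have kbc: "\<And>k. k < n \<Longrightarrow> ket_bra (us ! k) \<in> carrier_mat n n" using usc by (simp add: kb_outer)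
  show ?thesis
  proof (rule eq_matI)
    fix i j assume "i < dim_row (1\<^sub>m n)" "j < dim_col (1\<^sub>m n)"
    hence ij: "i < n" "j < n" by auto
    have "msum (\<lambda>k. ket_bra (us ! k)) n n $$ (i,j) = (\<Sum>k<n. ket_bra (us ! k) $$ (i,j))"
      by (rule msum_index[OF kbc ij])
    also have "\<dots> = (\<Sum>k<n. U $$ (i,k) * cnj (U $$ (j,k)))"
      using usc ij Ui by (intro sum.cong refl) (auto simp: kb_outer outer_def)
    also have "\<dots> = (U * mat_adjoint U) $$ (i,j)"
      using Uc ij by (simp add: scalar_prod_def atLeast0LessThan)
    also have "\<dots> = 1\<^sub>m n $$ (i,j)" using UA by simp
    finally show "msum (\<lambda>k. ket_bra (us ! k)) n n $$ (i,j) = 1\<^sub>m n $$ (i,j)" .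
  qed (use msum_carrier[of n "\<lambda>k. ket_bra (us ! k)" n] kbc in auto)
qed

lemma dim_rel:
  assumes lin: "linear_map_mat d1 d2 f" and up: "unitarity_preserving d1 d2 f" and f1: "f (1\<^sub>m d1) = 1\<^sub>m d2"
    and u: "u \<in> carrier_vec d1" and uu: "u \<bullet>c u = 1"
  shows "d2 = d1 * vec_space.rank d2 (f (ket_bra u))"
proof -
  obtain us where lus: "length us = d1" and usc: "\<forall>k<d1. us ! k \<in> carrier_vec d1" and us0: "us ! 0 = u"
    and on: "\<forall>k<d1. \<forall>l<d1. us ! k \<bullet>c us ! l = (if k = l then 1 else 0)"
    using onb_ext[OF u uu] by blast
  have npos: "0 < d1"
  proof (rule ccontr)
    assume "\<not> 0 < d1" hence "d1 = 0" by simp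
    hence "u \<bullet>c u = 0" using u by (simp add: cprod_sum)
    with uu show False by simp
  qed
  have kbc: "\<And>k. k < d1 \<Longrightarrow> ket_bra (us ! k) \<in> carrier_mat d1 d1" using usc by (simp add: kb_outer)
  have fkc: "\<And>k. k < d1 \<Longrightarrow> f (ket_bra (us ! k)) \<in> carrier_mat d2 d2" using kbc lin_D(1)[OF lin] by blast
  have trk: "tr (f (ket_bra (us ! k))) = tr (f (ket_bra u))" if k: "k < d1" for k
  proof (cases "k = 0")
    case True then show ?thesis using us0 by simp
  next
    case False
    have "u \<bullet>c us ! k = 0" using on k npos False us0 by force
    moreover have "us ! k \<bullet>c us ! k = 1" using on k by simp
    ultimately show ?thesis using pair_rel(1)[OF lin up f1 u _ uu] usc k by metis
  qed
  have "of_nat d2 = tr (1\<^sub>m d2)" by (simp add: tr_one)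
  also have "1\<^sub>m d2 = f (msum (\<lambda>k. ket_bra (us ! k)) d1 d1)" using onb_sum[OF lus usc on] f1 by simp
  also have "\<dots> = msum (\<lambda>k. f (ket_bra (us ! k))) d2 d1" by (rule msum_f[OF lin kbc])
  also have "tr \<dots> = (\<Sum>k<d1. tr (f (ket_bra (us ! k))))" by (rule msum_tr[OF fkc])
  also have "\<dots> = of_nat d1 * tr (f (ket_bra u))" using trk by simp
  also have "tr (f (ket_bra u)) = of_nat (vec_space.rank d2 (f (ket_bra u)))"
  proof -
    have P: "orth_projector d2 (f (ket_bra u))" by (rule proj_image[OF lin up f1 kb_proj[OF u uu]])
    show ?thesis using rank_trace[of "f (ket_bra u)" d2] P unfolding orth_projector_def by simp
  qed
  finally have "(of_nat d2 :: complex) = of_nat (d1 * vec_space.rank d2 (f (ket_bra u)))" by simp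
  thus ?thesis using of_nat_eq_iff by blast
qed


theorem lemma1:
  fixes d1 d2 :: nat and f :: "complex mat \<Rightarrow> complex mat"
  assumes "d1 > 0"
    and "linear_map_mat d1 d2 f"
    and "unitarity_preserving d1 d2 f"
    and "f (1\<^sub>m d1) = 1\<^sub>m d2"
  shows "d1 dvd d2 \<and>
    (\<forall>\<psi> \<phi>. \<psi> \<in> carrier_vec d1 \<longrightarrow> \<phi> \<in> carrier_vec d1 \<longrightarrow>
       \<psi> \<bullet>c \<psi> = 1 \<longrightarrow> \<phi> \<bullet>c \<phi> = 1 \<longrightarrow> \<psi> \<bullet>c \<phi> = 0 \<longrightarrow>
       orth_projector d2 (f (ket_bra \<psi>)) \<and> orth_projector d2 (f (ket_bra \<phi>)) \<and>
       f (ket_bra \<psi>) * f (ket_bra \<phi>) = 0\<^sub>m d2 d2 \<and>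
       vec_space.rank d2 (f (ket_bra \<psi>)) = d2 div d1 \<and>
       vec_space.rank d2 (f (ket_bra \<phi>)) = d2 div d1)"
proof -
  note pos = assms(1) and lin = assms(2) and up = assms(3) and f1 = assms(4)
  define e :: "complex vec" where "e = unit_vec d1 0"
  have ec: "e \<in> carrier_vec d1" unfolding e_def by simp
  have "e \<bullet>c e = (\<Sum>k<d1. e $ k * cnj (e $ k))" by (rule cprod_sum[OF ec])
  also have "\<dots> = (\<Sum>k<d1. if k = 0 then 1 else 0)"
    by (rule sum.cong) (auto simp: e_def)
  also have "\<dots> = 1" using pos by simp
  finally have ee: "e \<bullet>c e = 1" .
  have "d2 = d1 * vec_space.rank d2 (f (ket_bra e))" by (rule dim_rel[OF lin up f1 ec ee])
  hence dvd: "d1 dvd d2" by (metis dvd_triv_left)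
  have rk: "vec_space.rank d2 (f (ket_bra u)) = d2 div d1" if u: "u \<in> carrier_vec d1" and uu: "u \<bullet>c u = 1" for u
  proof -
    have "d2 = d1 * vec_space.rank d2 (f (ket_bra u))" by (rule dim_rel[OF lin up f1 u uu])
    thus ?thesis using pos by (metis nonzero_mult_div_cancel_left less_not_refl)
  qed
  show ?thesis
  proof (intro conjI allI impI dvd)
    fix \<psi> \<phi> :: "complex vec" assume \<psi>: "\<psi> \<in> carrier_vec d1" and \<phi>: "\<phi> \<in> carrier_vec d1"
      and \<psi>\<psi>: "\<psi> \<bullet>c \<psi> = 1" and \<phi>\<phi>: "\<phi> \<bullet>c \<phi> = 1" and \<psi>\<phi>: "\<psi> \<bullet>c \<phi> = 0"
    show "orth_projector d2 (f (ket_bra \<psi>))" by (rule proj_image[OF lin up f1 kb_proj[OF \<psi> \<psi>\<psi>]])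
    show "orth_projector d2 (f (ket_bra \<phi>))" by (rule proj_image[OF lin up f1 kb_proj[OF \<phi> \<phi>\<phi>]])
    show "f (ket_bra \<psi>) * f (ket_bra \<phi>) = 0\<^sub>m d2 d2" by (rule pair_rel(2)[OF lin up f1 \<psi> \<phi> \<psi>\<psi> \<phi>\<phi> \<psi>\<phi>])
    show "vec_space.rank d2 (f (ket_bra \<psi>)) = d2 div d1" by (rule rk[OF \<psi> \<psi>\<psi>])
    show "vec_space.rank d2 (f (ket_bra \<phi>)) = d2 div d1" by (rule rk[OF \<phi> \<phi>\<phi>])
  qed
qed

end
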